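(* Let $n\ge 2$ and let $g^K\in\mathcal{G}^K_{n,C}$ be a ranked labeled tree on the leaf set $[n]=\{1,\dots,n\}$ that is compatible with a given Kingman perfect phylogeny $\mathcal{T}^K$. For $i=1,\dots,n-1$, let $g^K_{i,1}$ and $g^K_{i,2}$ be the two subtrees (clades) of $g^K$ that are merged at the $i$-th coalescent event (i.e. the two child subtrees of the internal node of rank $i$), and let $|g^K_{i,j}|$ denote the number of leaves of $g^K_{i,j}$. Let $c^{LT}(g^K)$ be the number of ranked labeled trees $g'^K\in\mathcal{G}^K_{n,C}$ with $LT(g'^K)=LT(g^K)$. Then $$c^{LT}(g^K)=\prod_{i=1}^{n-1}\frac{(|g^K_{i,1}|+|g^K_{i,2}|-2)!}{(|g^K_{i,1}|-1)!\,(|g^K_{i,2}|-1)!}.$$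
   Context: A ranked labeled tree on $[n]$ is a rooted binary tree with $n$ leaves bijectively labeled by $[n]$, together with a ranking of its $n-1$ internal nodes, i.e. a bijection from internal nodes to $\{1,\dots,n-1\}$ such that every internal node has smaller rank than its parent (rank $i$ = the $i$-th coalescence, read from the leaves to the root). Two ranked labeled trees are equal if there is a leaf-label-preserving and rank-preserving isomorphism between them. For a ranked labeled tree $g^K$, $LT(g^K)$ denotes the unranked labeled tree obtained by forgetting the ranking. A Kingman perfect phylogeny $\mathcal{T}^K$ is a rooted (possibly multifurcating) tree in which each node $v$ carries a (possibly empty) set of individual labels, these sets being pairwise disjoint with union $[n]$. For a node $v$, let $D(v)$ be the union of the label sets of all nodes in the subtree of $\mathcal{T}^K$ rooted at $v$. A ranked labeled tree $g^K$ on $[n]$ is compatible with $\mathcal{T}^K$ if for every node $v$ of $\mathcal{T}^K$ with $D(v)\neq\emptyset$, the set $D(v)$ is exactly the leaf set of some subtree (clade) of $g^K$. $\mathcal{G}^K_{n,C}$ denotes the set of ranked labeled trees on $[n]$ compatible with $\mathcal{T}^K$. *)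

theory Defs
  imports Complex_Main
begin

text \<open>A ranked labeled tree on [n] = {1..n} is encoded canonically by the map sending each
rank i in {1..n-1} to the leaf set (clade) below the internal node of rank i
(and sending every other natural number to the empty set).  Two ranked labeled trees are
equal (up to leaf-label and rank preserving isomorphism) iff these maps coincide.\<close>

definition leaf_clades :: "nat \<Rightarrow> nat set set" where
  "leaf_clades n = {{k} | k. k \<in> {1..n}}"

text \<open>Blocks after the first j coalescences: maximal elements among leaves and the clades of
ranks 1..j.\<close>
definition blocks :: "nat \<Rightarrow> (nat \<Rightarrow> nat set) \<Rightarrow> nat \<Rightarrow> nat set set" where
  "blocks n c j = {S. S \<in> leaf_clades n \<union> c ` {1..j} \<and> \<not> (\<exists>T \<in> c ` {1..j}. S \<subset> T)}"

definition is_child_pair :: "nat \<Rightarrow> (nat \<Rightarrow> nat set) \<Rightarrow> nat \<Rightarrow> nat set \<Rightarrow> nat set \<Rightarrow> bool" where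
  "is_child_pair n c i A B \<longleftrightarrow>
     A \<in> blocks n c (i - 1) \<and> B \<in> blocks n c (i - 1) \<and> A \<noteq> B \<and> c i = A \<union> B"

definition ranked_tree :: "nat \<Rightarrow> (nat \<Rightarrow> nat set) \<Rightarrow> bool" where
  "ranked_tree n c \<longleftrightarrow>
     (\<forall>i \<in> {1..n-1}. \<exists>A B. is_child_pair n c i A B) \<and>
     (\<forall>i. i \<notin> {1..n-1} \<longrightarrow> c i = {})"

definition clades :: "nat \<Rightarrow> (nat \<Rightarrow> nat set) \<Rightarrow> nat set set" where
  "clades n c = leaf_clades n \<union> c ` {1..n-1}"

text \<open>The unranked labeled tree LT(g): the (nontrivial) clade system, forgetting ranks.\<close>
definition LT :: "nat \<Rightarrow> (nat \<Rightarrow> nat set) \<Rightarrow> nat set set" where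
  "LT n c = c ` {1..n-1}"

datatype ptree = PNode "nat set" "ptree list"

fun D :: "ptree \<Rightarrow> nat set" where
  "D (PNode L ts) = L \<union> \<Union> (set (map D ts))"

fun subtrees :: "ptree \<Rightarrow> ptree set" where
  "subtrees (PNode L ts) = insert (PNode L ts) (\<Union> (set (map subtrees ts)))"

fun label_list :: "ptree \<Rightarrow> nat set list" where
  "label_list (PNode L ts) = L # concat (map label_list ts)"

definition kingman_pp :: "nat \<Rightarrow> ptree \<Rightarrow> bool" where
  "kingman_pp n T \<longleftrightarrow>
     (\<forall>i < length (label_list T). \<forall>j < length (label_list T).
        i \<noteq> j \<longrightarrow> label_list T ! i \<inter> label_list T ! j = {}) \<and>
     \<Union> (set (label_list T)) = {1..n}"

definition compatible :: "nat \<Rightarrow> ptree \<Rightarrow> (nat \<Rightarrow> nat set) \<Rightarrow> bool" where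
  "compatible n T c \<longleftrightarrow> (\<forall>v \<in> subtrees T. D v \<noteq> {} \<longrightarrow> D v \<in> clades n c)"

definition GK :: "nat \<Rightarrow> ptree \<Rightarrow> (nat \<Rightarrow> nat set) set" where
  "GK n T = {c. ranked_tree n c \<and> compatible n T c}"

definition cLT :: "nat \<Rightarrow> ptree \<Rightarrow> (nat \<Rightarrow> nat set) \<Rightarrow> nat" where
  "cLT n T c = card {c' \<in> GK n T. LT n c' = LT n c}"

end

theory Submission
  imports Defs
begin

definition linext :: "nat set set \<Rightarrow> (nat \<Rightarrow> nat set) set" where
  "linext P = {f. (\<forall>i. i \<notin> {1..card P} \<longrightarrow> f i = {}) \<and> bij_betw f {1..card P} P \<and>
      (\<forall>i\<in>{1..card P}. \<forall>j\<in>{1..card P}. f i \<subset> f j \<longrightarrow> i < j)}"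

definition hook :: "nat set set \<Rightarrow> nat set \<Rightarrow> nat" where
  "hook P X = card {Y\<in>P. Y \<subseteq> X}"

definition laminar :: "nat set set \<Rightarrow> bool" where
  "laminar P \<longleftrightarrow> (\<forall>X\<in>P. \<forall>Y\<in>P. X \<subseteq> Y \<or> Y \<subseteq> X \<or> X \<inter> Y = {})"

definition maxs :: "nat set set \<Rightarrow> nat set set" where
  "maxs P = {x\<in>P. \<not>(\<exists>Y\<in>P. x \<subset> Y)}"

lemma linext_finite: "finite P \<Longrightarrow> finite (linext P)"
proof -
  assume "finite P"
  have "linext P \<subseteq> {f. \<forall>x. (x \<in> {1..card P} \<longrightarrow> f x \<in> P) \<and> (x \<notin> {1..card P} \<longrightarrow> f x = {})}"
    unfolding linext_def bij_betw_def by auto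
  moreover have "finite {f. \<forall>x. (x \<in> {1..card P} \<longrightarrow> f x \<in> P) \<and> (x \<notin> {1..card P} \<longrightarrow> f x = {})}"
    using finite_set_of_finite_funs[of "{1..card P}" P "{}"] \<open>finite P\<close> by simp
  ultimately show ?thesis by (rule finite_subset)
qed

lemma linext_last_max:
  assumes "f \<in> linext P" "card P = Suc M"
  shows "f (Suc M) \<in> maxs P"
proof -
  have b: "bij_betw f {1..Suc M} P" and o: "\<forall>i\<in>{1..Suc M}. \<forall>j\<in>{1..Suc M}. f i \<subset> f j \<longrightarrow> i < j"
    using assms unfolding linext_def by auto
  have "f (Suc M) \<in> P" using b by (auto simp: bij_betw_def)
  moreover have "\<not>(\<exists>Y\<in>P. f (Suc M) \<subset> Y)"
  proof
    assume "\<exists>Y\<in>P. f (Suc M) \<subset> Y"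
    then obtain Y where "Y \<in> P" "f (Suc M) \<subset> Y" by blast
    then obtain j where "j \<in> {1..Suc M}" "Y = f j" using b unfolding bij_betw_def by (metis imageE)
    moreover have "Suc M \<in> {1..Suc M}" by simp
    ultimately have "Suc M < j" using o \<open>f (Suc M) \<subset> Y\<close> by blast
    then show False using \<open>j \<in> {1..Suc M}\<close> by simp
  qed
  ultimately show ?thesis by (simp add: maxs_def)
qed

lemma linext_split:
  assumes fin: "finite P" and cP: "card P = Suc M" and xm: "x \<in> maxs P"
  shows "card {f\<in>linext P. f (Suc M) = x} = card (linext (P - {x}))"
proof -
  have xP: "x \<in> P" and xmax: "\<And>Y. Y \<in> P \<Longrightarrow> \<not> x \<subset> Y" using xm by (auto simp: maxs_def)
  have cP': "card (P - {x}) = M" using cP xP fin by simp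
  let ?A = "{f\<in>linext P. f (Suc M) = x}"
  let ?B = "linext (P - {x})"
  have "bij_betw (\<lambda>f. f(Suc M := {})) ?A ?B"
  proof (rule bij_betw_byWitness[where f'="\<lambda>g. g(Suc M := x)"])
    show "\<forall>a\<in>?A. (a(Suc M := {}))(Suc M := x) = a" by auto
    show "\<forall>a'\<in>?B. (a'(Suc M := x))(Suc M := {}) = a'"
    proof
      fix a' assume "a' \<in> ?B"
      then have "a' (Suc M) = {}" using cP' by (simp add: linext_def)
      then show "(a'(Suc M := x))(Suc M := {}) = a'" by (metis fun_upd_idem fun_upd_upd)
    qed
    show "(\<lambda>f. f(Suc M := {})) ` ?A \<subseteq> ?B"
    proof
      fix g assume "g \<in> (\<lambda>f. f(Suc M := {})) ` ?A"
      then obtain a where a: "a \<in> linext P" "a (Suc M) = x" and g: "g = a(Suc M := {})" by auto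
      have z: "\<forall>i. i \<notin> {1..Suc M} \<longrightarrow> a i = {}" and b: "bij_betw a {1..Suc M} P"
        and o: "\<forall>i\<in>{1..Suc M}. \<forall>j\<in>{1..Suc M}. a i \<subset> a j \<longrightarrow> i < j"
        using a cP unfolding linext_def by auto
      have inj: "inj_on a {1..Suc M}" using b by (simp add: bij_betw_def)
      have "a ` {1..M} = a ` ({1..Suc M} - {Suc M})"
        by (metis atLeastAtMostSuc_conv atLeastAtMost_iff Diff_insert_absorb le_add1 not_less_eq_eq plus_1_eq_Suc nat_le_linear)
      also have "\<dots> = a ` {1..Suc M} - a ` {Suc M}"
        by (rule inj_on_image_set_diff[OF inj]) auto
      also have "\<dots> = P - {x}" using b a(2) by (simp add: bij_betw_def)
      finally have im: "a ` {1..M} = P - {x}" .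
      have "bij_betw a {1..M} (P - {x})"
        using im inj_on_subset[OF inj] by (auto simp: bij_betw_def)
      then have "bij_betw g {1..M} (P - {x})"
        by (rule bij_betw_cong[THEN iffD1, rotated]) (auto simp: g)
      moreover have "\<forall>i. i \<notin> {1..M} \<longrightarrow> g i = {}" using z g by auto
      moreover have "\<forall>i\<in>{1..M}. \<forall>j\<in>{1..M}. g i \<subset> g j \<longrightarrow> i < j" using o g by auto
      ultimately show "g \<in> ?B" using cP' by (simp add: linext_def)
    qed
    show "(\<lambda>g. g(Suc M := x)) ` ?B \<subseteq> ?A"
    proof
      fix a assume "a \<in> (\<lambda>g. g(Suc M := x)) ` ?B"
      then obtain g where gB: "g \<in> ?B" and a: "a = g(Suc M := x)" by auto
      have z: "\<forall>i. i \<notin> {1..M} \<longrightarrow> g i = {}" and b: "bij_betw g {1..M} (P - {x})"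
        and o: "\<forall>i\<in>{1..M}. \<forall>j\<in>{1..M}. g i \<subset> g j \<longrightarrow> i < j"
        using gB cP' unfolding linext_def by auto
      have eqs: "{1..Suc M} = insert (Suc M) {1..M}" by auto
      have ab: "bij_betw a {1..M} (P - {x})"
        by (rule bij_betw_cong[THEN iffD1, OF _ b]) (auto simp: a)
      have "bij_betw a ({1..M} \<union> {Suc M}) ((P - {x}) \<union> {a (Suc M)})"
        using notIn_Un_bij_betw3[of "Suc M" "{1..M}" a "P - {x}"] ab a by auto
      then have bb: "bij_betw a {1..Suc M} P" using eqs xP a by (simp add: insert_absorb)
      have zz: "\<forall>i. i \<notin> {1..Suc M} \<longrightarrow> a i = {}" using z a by auto
      have oo: "\<forall>i\<in>{1..Suc M}. \<forall>j\<in>{1..Suc M}. a i \<subset> a j \<longrightarrow> i < j"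
      proof (intro ballI impI)
        fix i j assume i: "i \<in> {1..Suc M}" and j: "j \<in> {1..Suc M}" and s: "a i \<subset> a j"
        show "i < j"
        proof (cases "i = Suc M")
          case True
          then have "a j \<in> P" using bb j by (auto simp: bij_betw_def)
          then show ?thesis using xmax s True a by auto
        next
          case False
          show ?thesis
          proof (cases "j = Suc M")
            case True then show ?thesis using False i by auto
          next
            case F2: False
            then show ?thesis using False o i j s a by auto
          qed
        qed
      qed
      show "a \<in> ?A" using zz bb oo cP a by (simp add: linext_def)
    qed
  qed
  then show ?thesis by (rule bij_betw_same_card)
qed

lemma sum_hooks_maxs:
  assumes fin: "finite P" and ne: "\<forall>X\<in>P. X \<noteq> {}" and lam: "laminar P"
  shows "(\<Sum>x\<in>maxs P. hook P x) = card P"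
proof -
  have eq: "(\<Union>x\<in>maxs P. {Y\<in>P. Y \<subseteq> x}) = P"
  proof
    show "P \<subseteq> (\<Union>x\<in>maxs P. {Y\<in>P. Y \<subseteq> x})"
    proof
      fix Y assume YP: "Y \<in> P"
      from finite_has_maximal2[OF fin YP] obtain m where
        "m \<in> P" "Y \<le> m" "\<forall>b\<in>P. m \<le> b \<longrightarrow> m = b" by blast
      then have "m \<in> maxs P" by (auto simp: maxs_def)
      then show "Y \<in> (\<Union>x\<in>maxs P. {Y\<in>P. Y \<subseteq> x})" using YP \<open>Y \<le> m\<close> by auto
    qed
  qed (auto simp: maxs_def)
  have disj: "\<forall>x\<in>maxs P. \<forall>y\<in>maxs P. x \<noteq> y \<longrightarrow> {Y\<in>P. Y \<subseteq> x} \<inter> {Y\<in>P. Y \<subseteq> y} = {}"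
  proof (intro ballI impI)
    fix x y assume x: "x \<in> maxs P" and y: "y \<in> maxs P" and xy: "x \<noteq> y"
    show "{Y\<in>P. Y \<subseteq> x} \<inter> {Y\<in>P. Y \<subseteq> y} = {}"
    proof (rule ccontr)
      assume "{Y\<in>P. Y \<subseteq> x} \<inter> {Y\<in>P. Y \<subseteq> y} \<noteq> {}"
      then obtain Y where "Y \<in> P" "Y \<subseteq> x" "Y \<subseteq> y" by blast
      then have "x \<inter> y \<noteq> {}" using ne by blast
      with lam x y have "x \<subseteq> y \<or> y \<subseteq> x" by (auto simp: laminar_def maxs_def)
      then show False using x y xy by (auto simp: maxs_def)
    qed
  qed
  have fm: "finite (maxs P)" using fin by (simp add: maxs_def)
  have "card (\<Union>x\<in>maxs P. {Y\<in>P. Y \<subseteq> x}) = (\<Sum>x\<in>maxs P. card {Y\<in>P. Y \<subseteq> x})"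
    by (rule card_UN_disjoint) (use fm fin disj in auto)
  then show ?thesis using eq by (simp add: hook_def)
qed

theorem linext_hook:
  "\<And>P. finite P \<Longrightarrow> card P = N \<Longrightarrow> \<forall>X\<in>P. X \<noteq> {} \<Longrightarrow> laminar P \<Longrightarrow>
    real (card (linext P)) * (\<Prod>X\<in>P. real (hook P X)) = fact N"
proof (induction N)
  case 0
  then have P0: "P = {}" by simp
  have "f \<in> linext {} \<longleftrightarrow> f = (\<lambda>_. {})" for f
    using bij_betw_def[of f "{}" "{}"] by (auto simp: linext_def fun_eq_iff)
  then have "linext P = {\<lambda>_. {}}" using P0 by blast
  then show ?case using P0 by simp
next
  case (Suc M)
  let ?L = "linext P"
  have lin: "?L = (\<Union>x\<in>maxs P. {f\<in>?L. f (Suc M) = x})"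
    using linext_last_max Suc.prems(2) by blast
  have fm: "finite (maxs P)" using Suc.prems(1) by (simp add: maxs_def)
  have "card ?L = card (\<Union>x\<in>maxs P. {f\<in>?L. f (Suc M) = x})" using lin by simp
  also have "\<dots> = (\<Sum>x\<in>maxs P. card {f\<in>?L. f (Suc M) = x})"
    by (rule card_UN_disjoint) (use linext_finite[OF Suc.prems(1)] fm in auto)
  also have "\<dots> = (\<Sum>x\<in>maxs P. card (linext (P - {x})))"
  proof (rule sum.cong)
    fix x assume "x \<in> maxs P"
    then show "card {f\<in>?L. f (Suc M) = x} = card (linext (P - {x}))"
      by (rule linext_split[OF Suc.prems(1,2)])
  qed simp
  finally have cL: "card ?L = (\<Sum>x\<in>maxs P. card (linext (P - {x})))" .
  have hk: "(\<Prod>X\<in>P. real (hook P X)) = real (hook P x) * (\<Prod>X\<in>P-{x}. real (hook (P-{x}) X))"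
    if x: "x \<in> maxs P" for x
  proof -
    have xP: "x \<in> P" using x by (simp add: maxs_def)
    have "(\<Prod>X\<in>P. real (hook P X)) = real (hook P x) * (\<Prod>X\<in>P-{x}. real (hook P X))"
      using xP Suc.prems(1) by (simp add: prod.remove)
    moreover have "\<forall>X\<in>P-{x}. hook P X = hook (P-{x}) X"
    proof
      fix X assume X: "X \<in> P - {x}"
      have "{Y\<in>P. Y \<subseteq> X} = {Y\<in>P-{x}. Y \<subseteq> X}"
        using x X by (auto simp: maxs_def)
      then show "hook P X = hook (P-{x}) X" by (simp add: hook_def)
    qed
    ultimately show ?thesis by simp
  qed
  have ih: "real (card (linext (P-{x}))) * (\<Prod>X\<in>P-{x}. real (hook (P-{x}) X)) = fact M"
    if x: "x \<in> maxs P" for x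
  proof (rule Suc.IH)
    have xP: "x \<in> P" using x by (simp add: maxs_def)
    show "finite (P - {x})" using Suc.prems(1) by simp
    show "card (P - {x}) = M" using Suc.prems(1,2) xP by simp
    show "\<forall>X\<in>P - {x}. X \<noteq> {}" using Suc.prems(3) by simp
    show "laminar (P - {x})" using Suc.prems(4) by (simp add: laminar_def)
  qed
  have "real (card ?L) * (\<Prod>X\<in>P. real (hook P X))
      = (\<Sum>x\<in>maxs P. real (card (linext (P - {x}))) * (\<Prod>X\<in>P. real (hook P X)))"
    by (simp add: cL sum_distrib_right)
  also have "\<dots> = (\<Sum>x\<in>maxs P. fact M * real (hook P x))"
  proof (rule sum.cong)
    fix x assume x: "x \<in> maxs P"
    show "real (card (linext (P - {x}))) * (\<Prod>X\<in>P. real (hook P X)) = fact M * real (hook P x)"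
    proof -
      have "real (card (linext (P - {x}))) * (\<Prod>X\<in>P. real (hook P X))
          = (real (card (linext (P-{x}))) * (\<Prod>X\<in>P-{x}. real (hook (P-{x}) X))) * real (hook P x)"
        using hk[OF x] by (simp only: mult_ac)
      then show ?thesis using ih[OF x] by simp
    qed
  qed simp
  also have "\<dots> = fact M * real (\<Sum>x\<in>maxs P. hook P x)"
    by (simp add: sum_distrib_left)
  also have "\<dots> = fact M * real (Suc M)"
    using sum_hooks_maxs[OF Suc.prems(1,3,4)] Suc.prems(2) by simp
  also have "\<dots> = fact (Suc M)" by (simp add: fact_Suc)
  finally show ?case .
qed


definition part :: "nat \<Rightarrow> nat set set \<Rightarrow> bool" where
  "part n B \<longleftrightarrow> (\<forall>E\<in>B. E \<noteq> {}) \<and> (\<forall>E\<in>B. \<forall>E'\<in>B. E \<noteq> E' \<longrightarrow> E \<inter> E' = {}) \<and> \<Union>B = {1..n}"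

lemma part_eq: "part n B \<Longrightarrow> E \<in> B \<Longrightarrow> E' \<in> B \<Longrightarrow> E \<inter> E' \<noteq> {} \<Longrightarrow> E = E'"
  unfolding part_def by blast

lemma part_ne: "part n B \<Longrightarrow> E \<in> B \<Longrightarrow> E \<noteq> {}"
  unfolding part_def by blast

lemma part_sub: "part n B \<Longrightarrow> E \<in> B \<Longrightarrow> E \<subseteq> {1..n}"
  unfolding part_def by blast

lemma blocks_max:
  assumes "X \<in> leaf_clades n \<union> c ` {1..j}"
  shows "\<exists>E\<in>blocks n c j. X \<subseteq> E"
proof -
  let ?A = "insert X (c ` {1..j})"
  have "finite ?A" by simp
  from finite_has_maximal2[OF this, of X] obtain m where
    m: "m \<in> ?A" "X \<le> m" "\<forall>b\<in>?A. m \<le> b \<longrightarrow> m = b" by blast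
  have "m \<in> leaf_clades n \<union> c ` {1..j}" using m(1) assms by blast
  moreover have "\<not> (\<exists>T \<in> c ` {1..j}. m \<subset> T)" using m(3) by blast
  ultimately have "m \<in> blocks n c j" unfolding blocks_def by blast
  then show ?thesis using m(2) by blast
qed

lemma blocks_0: "blocks n c 0 = leaf_clades n"
  unfolding blocks_def leaf_clades_def by auto

lemma leaf_clades_img: "leaf_clades n = (\<lambda>k. {k}) ` {1..n}"
  unfolding leaf_clades_def by auto

lemma img_insert: "1 \<le> (j::nat) \<Longrightarrow> c ` {1..j} = insert (c j) (c ` {1..j-1})"
proof -
  assume "1 \<le> j"
  then obtain k where k: "j = Suc k" by (cases j) auto
  have "{1..j} = insert j {1..j-1}" unfolding k by (auto simp: atLeastAtMostSuc_conv)
  then show ?thesis by simp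
qed

lemma blocks_step:
  assumes j: "1 \<le> j" and p: "part n (blocks n c (j-1))" and cp: "is_child_pair n c j A B"
  shows "blocks n c j = insert (A \<union> B) (blocks n c (j-1) - {A,B})"
proof -
  have A: "A \<in> blocks n c (j-1)" and B: "B \<in> blocks n c (j-1)" and AB: "A \<noteq> B"
    and cj: "c j = A \<union> B" using cp unfolding is_child_pair_def by auto
  have Ane: "A \<noteq> {}" and Bne: "B \<noteq> {}" using A B p part_ne by auto
  have ABd: "A \<inter> B = {}" using A B AB p part_eq by blast
  have im: "c ` {1..j} = insert (c j) (c ` {1..j-1})" using img_insert[OF j] .
  have ApAB: "A \<subset> A \<union> B" using Bne ABd by blast
  have BpAB: "B \<subset> A \<union> B" using Ane ABd by blast
  show ?thesis
  proof (rule set_eqI)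
    fix S
    show "S \<in> blocks n c j \<longleftrightarrow> S \<in> insert (A \<union> B) (blocks n c (j-1) - {A,B})"
    proof
      assume S: "S \<in> blocks n c j"
      then have SF: "S \<in> leaf_clades n \<union> c ` {1..j}" and Sm: "\<not> (\<exists>T \<in> c ` {1..j}. S \<subset> T)"
        unfolding blocks_def by auto
      show "S \<in> insert (A \<union> B) (blocks n c (j-1) - {A,B})"
      proof (cases "S = c j")
        case True then show ?thesis using cj by simp
      next
        case False
        then have "S \<in> leaf_clades n \<union> c ` {1..j-1}" using SF im by auto
        moreover have "\<not> (\<exists>T \<in> c ` {1..j-1}. S \<subset> T)" using Sm im by auto
        ultimately have "S \<in> blocks n c (j-1)" unfolding blocks_def by blast
        moreover have "S \<noteq> A" "S \<noteq> B" using Sm im cj ApAB BpAB by auto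
        ultimately show ?thesis by simp
      qed
    next
      assume S: "S \<in> insert (A \<union> B) (blocks n c (j-1) - {A,B})"
      show "S \<in> blocks n c j"
      proof (cases "S = A \<union> B")
        case True
        have "S \<in> leaf_clades n \<union> c ` {1..j}" using True cj im by auto
        moreover have "\<not> (\<exists>T \<in> c ` {1..j}. S \<subset> T)"
        proof
          assume "\<exists>T \<in> c ` {1..j}. S \<subset> T"
          then obtain T where T: "T \<in> c ` {1..j}" "S \<subset> T" by blast
          then have "T \<noteq> c j" using True cj by auto
          then have "T \<in> leaf_clades n \<union> c ` {1..j-1}" using T im by auto
          from blocks_max[OF this] obtain E where E: "E \<in> blocks n c (j-1)" "T \<subseteq> E" by blast
          have "A = E" using part_eq[OF p A E(1)] Ane T E True by blast
          moreover have "B = E" using part_eq[OF p B E(1)] Bne T E True by blast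
          ultimately show False using AB by simp
        qed
        ultimately show ?thesis unfolding blocks_def by blast
      next
        case False
        then have Sb: "S \<in> blocks n c (j-1)" and SA: "S \<noteq> A" and SB: "S \<noteq> B" using S by auto
        then have SF: "S \<in> leaf_clades n \<union> c ` {1..j-1}" and Sm: "\<not> (\<exists>T \<in> c ` {1..j-1}. S \<subset> T)"
          unfolding blocks_def by auto
        have Sne: "S \<noteq> {}" using Sb p part_ne by auto
        have "\<not> S \<subset> A \<union> B"
        proof
          assume "S \<subset> A \<union> B"
          then have "S \<inter> A \<noteq> {} \<or> S \<inter> B \<noteq> {}" using Sne by blast
          then show False using part_eq[OF p Sb A] part_eq[OF p Sb B] SA SB by blast
        qed
        then have "\<not> (\<exists>T \<in> c ` {1..j}. S \<subset> T)" using Sm im cj by auto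
        moreover have "S \<in> leaf_clades n \<union> c ` {1..j}" using SF im by auto
        ultimately show ?thesis unfolding blocks_def by blast
      qed
    qed
  qed
qed

lemma blocks_inv:
  assumes rt: "ranked_tree n c"
  shows "j \<le> n - 1 \<Longrightarrow> part n (blocks n c j) \<and> finite (blocks n c j) \<and> card (blocks n c j) = n - j"
proof (induction j)
  case 0
  have "part n (leaf_clades n)" unfolding part_def leaf_clades_img by auto
  moreover have "card (leaf_clades n) = n"
    unfolding leaf_clades_img by (subst card_image) (auto simp: inj_on_def)
  ultimately show ?case by (simp add: blocks_0 leaf_clades_img)
next
  case (Suc j)
  then have IH: "part n (blocks n c j)" "finite (blocks n c j)" "card (blocks n c j) = n - j" by auto
  from rt Suc.prems obtain A B where cp: "is_child_pair n c (Suc j) A B"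
    unfolding ranked_tree_def by fastforce
  have st: "blocks n c (Suc j) = insert (A \<union> B) (blocks n c j - {A,B})"
    using blocks_step[of "Suc j" n c A B] IH cp by simp
  have A: "A \<in> blocks n c j" and B: "B \<in> blocks n c j" and AB: "A \<noteq> B"
    using cp unfolding is_child_pair_def by auto
  have Ane: "A \<noteq> {}" and Bne: "B \<noteq> {}" using A B IH(1) part_ne by auto
  have notin: "A \<union> B \<notin> blocks n c j - {A,B}"
  proof
    assume "A \<union> B \<in> blocks n c j - {A,B}"
    then show False using part_eq[OF IH(1) A, of "A \<union> B"] Ane by auto
  qed
  have p: "part n (blocks n c (Suc j))"
    unfolding part_def
  proof (intro conjI)
    show "\<forall>E\<in>blocks n c (Suc j). E \<noteq> {}" using st IH(1) Ane part_ne by auto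
    show "\<forall>E\<in>blocks n c (Suc j). \<forall>E'\<in>blocks n c (Suc j). E \<noteq> E' \<longrightarrow> E \<inter> E' = {}"
    proof (intro ballI impI)
      fix E E' assume E: "E \<in> blocks n c (Suc j)" and E': "E' \<in> blocks n c (Suc j)" and ne: "E \<noteq> E'"
      have dA: "X \<in> blocks n c j - {A,B} \<Longrightarrow> X \<inter> (A \<union> B) = {}" for X
        using part_eq[OF IH(1) _ A, of X] part_eq[OF IH(1) _ B, of X] by blast
      show "E \<inter> E' = {}"
        using E E' ne st dA part_eq[OF IH(1), of E E'] by auto
    qed
    show "\<Union>(blocks n c (Suc j)) = {1..n}"
    proof -
      have "\<Union>(blocks n c (Suc j)) = (A \<union> B) \<union> \<Union>(blocks n c j - {A,B})" using st by simp
      also have "\<dots> = \<Union>(blocks n c j)" using A B by blast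
      finally show ?thesis using IH(1) unfolding part_def by simp
    qed
  qed
  have c2: "card (blocks n c j) \<ge> 2"
  proof -
    have "{A,B} \<subseteq> blocks n c j" using A B by simp
    then have "card {A,B} \<le> card (blocks n c j)" using IH(2) card_mono by blast
    then show ?thesis using AB by simp
  qed
  have "card (blocks n c (Suc j)) = card (blocks n c j - {A,B}) + 1"
    using st notin IH(2) by simp
  also have "\<dots> = card (blocks n c j) - 2 + 1"
    using A B AB IH(2) by (simp add: card_Diff_subset)
  finally have "card (blocks n c (Suc j)) = n - Suc j" using c2 IH(3) by simp
  then show ?case using p st IH(2) by simp
qed


context
  fixes n :: nat and c :: "nat \<Rightarrow> nat set"
  assumes rt: "ranked_tree n c"
begin

lemma cpair: "i \<in> {1..n-1} \<Longrightarrow> \<exists>A B. is_child_pair n c i A B"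
  using rt unfolding ranked_tree_def by blast

lemma bpart: "j \<le> n-1 \<Longrightarrow> part n (blocks n c j)"
  using blocks_inv[OF rt] by blast

lemma bpart_pred: "i \<in> {1..n-1} \<Longrightarrow> part n (blocks n c (i-1))"
  by (rule bpart) auto

lemma child_props:
  assumes i: "i \<in> {1..n-1}" and cp: "is_child_pair n c i A B"
  shows "A \<in> blocks n c (i-1)" "B \<in> blocks n c (i-1)" "A \<noteq> B" "c i = A \<union> B"
    "A \<noteq> {}" "B \<noteq> {}" "A \<inter> B = {}" "finite A" "finite B"
    "blocks n c i = insert (A \<union> B) (blocks n c (i-1) - {A,B})"
proof -
  have p: "part n (blocks n c (i-1))" using i by (rule bpart_pred)
  show A: "A \<in> blocks n c (i-1)" and B: "B \<in> blocks n c (i-1)" and "A \<noteq> B" "c i = A \<union> B"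
    using cp unfolding is_child_pair_def by auto
  show "A \<noteq> {}" using part_ne[OF p A] .
  show "B \<noteq> {}" using part_ne[OF p B] .
  show "A \<inter> B = {}" using part_eq[OF p A B] \<open>A \<noteq> B\<close> by blast
  show "finite A" by (rule finite_subset[OF part_sub[OF p A]]) simp
  show "finite B" by (rule finite_subset[OF part_sub[OF p B]]) simp
  show "blocks n c i = insert (A \<union> B) (blocks n c (i-1) - {A,B})"
    using blocks_step[of i n c A B] i p cp by simp
qed

lemma c_in_blocks: "i \<in> {1..n-1} \<Longrightarrow> c i \<in> blocks n c i"
proof -
  assume i: "i \<in> {1..n-1}"
  then obtain A B where cp: "is_child_pair n c i A B" using cpair by blast
  show ?thesis using child_props(4,10)[OF i cp] by simp
qed

lemma c_ne: "i \<in> {1..n-1} \<Longrightarrow> c i \<noteq> {}"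
proof -
  assume i: "i \<in> {1..n-1}"
  then obtain A B where cp: "is_child_pair n c i A B" using cpair by blast
  show ?thesis using child_props(4,5)[OF i cp] by simp
qed

lemma c_sub: "i \<in> {1..n-1} \<Longrightarrow> c i \<subseteq> {1..n}"
proof -
  assume i: "i \<in> {1..n-1}"
  then have "part n (blocks n c i)" by (intro bpart) auto
  then show ?thesis using c_in_blocks[OF i] part_sub by blast
qed

lemma c_fin: "i \<in> {1..n-1} \<Longrightarrow> finite (c i)"
  using c_sub finite_subset by blast

lemma c_ge2: "i \<in> {1..n-1} \<Longrightarrow> card (c i) \<ge> 2"
proof -
  assume i: "i \<in> {1..n-1}"
  then obtain A B where cp: "is_child_pair n c i A B" using cpair by blast
  note cpr = child_props[OF i cp]
  have "card (c i) = card A + card B" using cpr by (simp add: card_Un_disjoint)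
  moreover have "card A \<ge> 1" "card B \<ge> 1" using cpr by (auto simp: Suc_le_eq card_gt_0_iff)
  ultimately show ?thesis by simp
qed

lemma c_below:
  assumes k: "k \<in> {1..n-1}" and i: "i \<in> {1..n-1}" and ki: "k < i"
  shows "\<exists>E\<in>blocks n c (i-1). c k \<subseteq> E"
proof -
  have "k \<in> {1..i-1}" using k ki by auto
  then have "c k \<in> leaf_clades n \<union> c ` {1..i-1}" by blast
  then show ?thesis by (rule blocks_max)
qed

lemma c_key:
  assumes k: "k \<in> {1..n-1}" and i: "i \<in> {1..n-1}" and ki: "k < i"
  shows "\<not> c i \<subseteq> c k"
proof
  assume sub: "c i \<subseteq> c k"
  obtain A B where cp: "is_child_pair n c i A B" using cpair i by blast
  note cpr = child_props[OF i cp]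
  have p: "part n (blocks n c (i-1))" using i by (rule bpart_pred)
  obtain E where E: "E \<in> blocks n c (i-1)" "c k \<subseteq> E" using c_below[OF k i ki] by blast
  have "A \<subseteq> E" "B \<subseteq> E" using cpr(4) sub E(2) by blast+
  then have "A \<inter> E \<noteq> {}" "B \<inter> E \<noteq> {}" using cpr(5,6) by blast+
  then have "A = E" "B = E" using part_eq[OF p cpr(1) E(1)] part_eq[OF p cpr(2) E(1)] by blast+
  then show False using cpr(3) by simp
qed

lemma c_lam:
  assumes k: "k \<in> {1..n-1}" and i: "i \<in> {1..n-1}" and ki: "k < i"
  shows "c k \<subseteq> c i \<or> c k \<inter> c i = {}"
proof -
  obtain A B where cp: "is_child_pair n c i A B" using cpair i by blast
  note cpr = child_props[OF i cp]
  have p: "part n (blocks n c (i-1))" using i by (rule bpart_pred)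
  obtain E where E: "E \<in> blocks n c (i-1)" "c k \<subseteq> E" using c_below[OF k i ki] by blast
  show ?thesis
  proof (cases "E \<inter> A = {} \<and> E \<inter> B = {}")
    case True
    then have "E \<inter> c i = {}" using cpr(4) by blast
    then show ?thesis using E(2) by blast
  next
    case False
    then have "E = A \<or> E = B" using part_eq[OF p E(1) cpr(1)] part_eq[OF p E(1) cpr(2)] by blast
    then have "E \<subseteq> c i" using cpr(4) by blast
    then show ?thesis using E(2) by blast
  qed
qed

lemma c_inj: "inj_on c {1..n-1}"
proof (rule inj_onI)
  fix i k assume i: "i \<in> {1..n-1}" and k: "k \<in> {1..n-1}" and eq: "c i = c k"
  show "i = k"
  proof (rule ccontr)
    assume "i \<noteq> k"
    then have "k < i \<or> i < k" by arith
    then show False using c_key[OF k i] c_key[OF i k] eq by auto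
  qed
qed

lemma hook_blocks:
  "j \<le> n-1 \<Longrightarrow> E \<in> blocks n c j \<Longrightarrow> card {k\<in>{1..j}. c k \<subseteq> E} = card E - 1"
proof (induction j arbitrary: E)
  case 0
  then show ?case by (auto simp: blocks_0 leaf_clades_def)
next
  case (Suc j)
  have i: "Suc j \<in> {1..n-1}" using Suc.prems by simp
  obtain A B where cp: "is_child_pair n c (Suc j) A B" using cpair i by blast
  note cpr = child_props[OF i cp]
  have Aj: "A \<in> blocks n c j" "B \<in> blocks n c j" using cpr(1,2) by simp_all
  have p: "part n (blocks n c j)" using Suc.prems bpart by simp
  have below: "\<exists>E'\<in>blocks n c j. c k \<subseteq> E'" if "k \<in> {1..j}" for k
    using blocks_max[of "c k" n c j] that by auto
  have cne: "c k \<noteq> {}" if "k \<in> {1..j}" for k using c_ne that Suc.prems by simp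
  show ?case
  proof (cases "E = A \<union> B")
    case True
    have eq: "{k\<in>{1..Suc j}. c k \<subseteq> E} = insert (Suc j) ({k\<in>{1..j}. c k \<subseteq> A} \<union> {k\<in>{1..j}. c k \<subseteq> B})"
    proof (rule set_eqI)
      fix k
      show "k \<in> {k\<in>{1..Suc j}. c k \<subseteq> E} \<longleftrightarrow> k \<in> insert (Suc j) ({k\<in>{1..j}. c k \<subseteq> A} \<union> {k\<in>{1..j}. c k \<subseteq> B})"
      proof
        assume k: "k \<in> {k\<in>{1..Suc j}. c k \<subseteq> E}"
        show "k \<in> insert (Suc j) ({k\<in>{1..j}. c k \<subseteq> A} \<union> {k\<in>{1..j}. c k \<subseteq> B})"
        proof (cases "k = Suc j")
          case False
          then have kj: "k \<in> {1..j}" using k by auto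
          obtain E' where E': "E' \<in> blocks n c j" "c k \<subseteq> E'" using below[OF kj] by blast
          have "c k \<subseteq> A \<union> B" using k True by simp
          then have "E' \<inter> A \<noteq> {} \<or> E' \<inter> B \<noteq> {}" using cne[OF kj] E' by blast
          then have "E' = A \<or> E' = B" using part_eq[OF p E'(1) Aj(1)] part_eq[OF p E'(1) Aj(2)] by blast
          then show ?thesis using kj E' by auto
        qed simp
      next
        assume "k \<in> insert (Suc j) ({k\<in>{1..j}. c k \<subseteq> A} \<union> {k\<in>{1..j}. c k \<subseteq> B})"
        then show "k \<in> {k\<in>{1..Suc j}. c k \<subseteq> E}" using True cpr by auto
      qed
    qed
    have dis: "{k\<in>{1..j}. c k \<subseteq> A} \<inter> {k\<in>{1..j}. c k \<subseteq> B} = {}"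
      using cne cpr by blast
    have cA: "card {k\<in>{1..j}. c k \<subseteq> A} = card A - 1" using Suc.IH[of A] Suc.prems cpr by simp
    have cB: "card {k\<in>{1..j}. c k \<subseteq> B} = card B - 1" using Suc.IH[of B] Suc.prems cpr by simp
    have "card {k\<in>{1..Suc j}. c k \<subseteq> E} = Suc (card A - 1 + (card B - 1))"
      unfolding eq using dis cA cB by (simp add: card_Un_disjoint)
    moreover have "card A \<ge> 1" "card B \<ge> 1" using cpr by (auto simp: Suc_le_eq card_gt_0_iff)
    moreover have "card E = card A + card B" using True cpr by (simp add: card_Un_disjoint)
    ultimately show ?thesis by simp
  next
    case False
    then have E: "E \<in> blocks n c j" "E \<noteq> A" "E \<noteq> B" using Suc.prems cpr by auto
    have "\<not> c (Suc j) \<subseteq> E"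
    proof
      assume "c (Suc j) \<subseteq> E"
      then have "E \<inter> A \<noteq> {}" using cpr by blast
      then show False using part_eq[OF p E(1) Aj(1)] E by simp
    qed
    then have "{k\<in>{1..Suc j}. c k \<subseteq> E} = {k\<in>{1..j}. c k \<subseteq> E}"
      using le_Suc_eq by auto
    then show ?thesis using Suc.IH[of E] Suc.prems E by simp
  qed
qed

lemma hook_c:
  assumes i: "i \<in> {1..n-1}"
  shows "card {k\<in>{1..n-1}. c k \<subseteq> c i} = card (c i) - 1"
proof -
  have "{k\<in>{1..n-1}. c k \<subseteq> c i} = {k\<in>{1..i}. c k \<subseteq> c i}"
  proof (rule set_eqI)
    fix k
    show "k \<in> {k\<in>{1..n-1}. c k \<subseteq> c i} \<longleftrightarrow> k \<in> {k\<in>{1..i}. c k \<subseteq> c i}"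
    proof
      assume k: "k \<in> {k\<in>{1..n-1}. c k \<subseteq> c i}"
      then have "\<not> i < k" using c_key[OF i, of k] by auto
      then show "k \<in> {k\<in>{1..i}. c k \<subseteq> c i}" using k by auto
    qed (use i in auto)
  qed
  then show ?thesis using hook_blocks[of i "c i"] c_in_blocks[OF i] i by simp
qed

end


lemma tele:
  assumes rt: "ranked_tree n c"
    and g: "\<forall>i\<in>{1..n-1}. is_child_pair n c i (g1 i) (g2 i)"
  shows "j \<le> n-1 \<Longrightarrow> (\<Prod>i=1..j. fact (card (g1 i) + card (g2 i) - 2)
                     / (fact (card (g1 i) - 1) * fact (card (g2 i) - 1)) :: real)
      * (\<Prod>i=1..j. real (card (c i) - 1)) = (\<Prod>E\<in>blocks n c j. fact (card E - 1))"
proof (induction j)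
  case 0
  have "(\<Prod>E\<in>blocks n c 0. (fact (card E - 1)::real)) = 1"
    by (rule prod.neutral) (auto simp: blocks_0 leaf_clades_def)
  then show ?case by simp
next
  case (Suc j)
  have i: "Suc j \<in> {1..n-1}" using Suc.prems by simp
  define A where "A = g1 (Suc j)"
  define B where "B = g2 (Suc j)"
  have cp: "is_child_pair n c (Suc j) A B" using g i by (simp add: A_def B_def)
  note cpr = child_props[OF rt i cp]
  have Aj: "A \<in> blocks n c j" "B \<in> blocks n c j" using cpr(1,2) by simp_all
  have p: "part n (blocks n c j)" and fin: "finite (blocks n c j)"
    using blocks_inv[OF rt, of j] Suc.prems by auto
  obtain a' where a: "card A = Suc a'" using cpr(5,8) by (cases "card A") auto
  obtain b' where b: "card B = Suc b'" using cpr(6,9) by (cases "card B") auto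
  have cAB: "card (A \<union> B) = Suc a' + Suc b'" using cpr(7,8,9) a b by (simp add: card_Un_disjoint)
  have cc: "card (c (Suc j)) = Suc a' + Suc b'" using cpr(4) cAB by simp
  let ?f = "\<lambda>E. (fact (card E - 1) :: real)"
  let ?R = "\<lambda>i. fact (card (g1 i) + card (g2 i) - 2)
                     / (fact (card (g1 i) - 1) * fact (card (g2 i) - 1)) :: real"
  have P1: "(\<Prod>E\<in>blocks n c j. ?f E) = ?f A * (?f B * (\<Prod>E\<in>blocks n c j - {A,B}. ?f E))"
  proof -
    have "(\<Prod>E\<in>blocks n c j. ?f E) = ?f A * (\<Prod>E\<in>blocks n c j - {A}. ?f E)"
      using fin Aj(1) by (rule prod.remove)
    also have "(\<Prod>E\<in>blocks n c j - {A}. ?f E) = ?f B * (\<Prod>E\<in>blocks n c j - {A} - {B}. ?f E)"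
      using fin Aj(2) cpr(3) by (intro prod.remove) auto
    also have "blocks n c j - {A} - {B} = blocks n c j - {A,B}" by auto
    finally show ?thesis .
  qed
  have notin: "A \<union> B \<notin> blocks n c j - {A,B}"
  proof
    assume "A \<union> B \<in> blocks n c j - {A,B}"
    then have m: "A \<union> B \<in> blocks n c j" "A \<union> B \<noteq> A" by auto
    have "(A \<union> B) \<inter> A \<noteq> {}" using cpr(5) by blast
    then show False using part_eq[OF p m(1) Aj(1)] m(2) by simp
  qed
  have st: "blocks n c (Suc j) = insert (A \<union> B) (blocks n c j - {A,B})" using cpr(10) by simp
  have P2: "(\<Prod>E\<in>blocks n c (Suc j). ?f E) = ?f (A \<union> B) * (\<Prod>E\<in>blocks n c j - {A,B}. ?f E)"
    unfolding st using fin notin by (simp add: prod.insert)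
  have R: "?R (Suc j) = fact (a' + b') / (fact a' * fact b')"
  proof -
    have "?R (Suc j) = fact (card A + card B - 2) / (fact (card A - 1) * fact (card B - 1))"
      by (simp add: A_def B_def)
    then show ?thesis using a b by simp
  qed
  have key: "?R (Suc j) * real (card (c (Suc j)) - 1) * (?f A * ?f B) = ?f (A \<union> B)"
  proof -
    have "?R (Suc j) * real (card (c (Suc j)) - 1) * (?f A * ?f B)
        = fact (a' + b') / (fact a' * fact b') * real (Suc (a' + b')) * (fact a' * fact b')"
      using R cc a b by simp
    also have "\<dots> = fact (a' + b') * real (Suc (a' + b'))" by simp
    also have "\<dots> = fact (Suc (a' + b'))" by (simp add: fact_Suc mult.commute)
    also have "\<dots> = ?f (A \<union> B)" using cAB by simp
    finally show ?thesis .
  qed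
  have "(\<Prod>i=1..Suc j. ?R i) * (\<Prod>i=1..Suc j. real (card (c i) - 1))
      = ((\<Prod>i=1..j. ?R i) * (\<Prod>i=1..j. real (card (c i) - 1))) * (?R (Suc j) * real (card (c (Suc j)) - 1))"
    by (simp add: prod.nat_ivl_Suc' mult_ac)
  also have "\<dots> = (\<Prod>E\<in>blocks n c j. ?f E) * (?R (Suc j) * real (card (c (Suc j)) - 1))"
    using Suc.IH Suc.prems by simp
  also have "\<dots> = (?R (Suc j) * real (card (c (Suc j)) - 1) * (?f A * ?f B)) * (\<Prod>E\<in>blocks n c j - {A,B}. ?f E)"
    unfolding P1 by (simp only: mult_ac)
  also have "\<dots> = (\<Prod>E\<in>blocks n c (Suc j). ?f E)" unfolding key P2 ..
  finally show ?case .
qed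

lemma ranked_in_linext:
  assumes rt': "ranked_tree n c'"
  shows "c' \<in> linext (c' ` {1..n-1})"
proof -
  have inj: "inj_on c' {1..n-1}" by (rule c_inj[OF rt'])
  have cS: "card (c' ` {1..n-1}) = n - 1" using card_image[OF inj] by simp
  have z: "\<forall>i. i \<notin> {1..n-1} \<longrightarrow> c' i = {}" using rt' unfolding ranked_tree_def by blast
  have b: "bij_betw c' {1..n-1} (c' ` {1..n-1})" using inj by (simp add: bij_betw_def)
  have o: "\<forall>i\<in>{1..n-1}. \<forall>j\<in>{1..n-1}. c' i \<subset> c' j \<longrightarrow> i < j"
  proof (intro ballI impI)
    fix i j assume i: "i \<in> {1..n-1}" and j: "j \<in> {1..n-1}" and s: "c' i \<subset> c' j"
    show "i < j"
    proof (rule ccontr)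
      assume "\<not> i < j"
      then have "j < i \<or> j = i" by arith
      then show False using c_key[OF rt' j i] s by auto
    qed
  qed
  show ?thesis unfolding linext_def cS using z b o by blast
qed

lemma linext_ranked:
  assumes rt: "ranked_tree n c" and f: "f \<in> linext (c ` {1..n-1})"
  shows "ranked_tree n f" "f ` {1..n-1} = c ` {1..n-1}"
proof -
  let ?S = "c ` {1..n-1}"
  have cinj: "inj_on c {1..n-1}" by (rule c_inj[OF rt])
  have cS: "card ?S = n - 1" using card_image[OF cinj] by simp
  have fz: "\<forall>i. i \<notin> {1..n-1} \<longrightarrow> f i = {}" and fb: "bij_betw f {1..n-1} ?S"
    and fo: "\<forall>i\<in>{1..n-1}. \<forall>j\<in>{1..n-1}. f i \<subset> f j \<longrightarrow> i < j"
    using f unfolding linext_def cS by auto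
  have fim: "f ` {1..n-1} = ?S" using fb by (simp add: bij_betw_def)
  have finj: "inj_on f {1..n-1}" using fb by (simp add: bij_betw_def)
  show "f ` {1..n-1} = c ` {1..n-1}" by (rule fim)
  have "\<forall>i\<in>{1..n-1}. \<exists>A B. is_child_pair n f i A B"
  proof
    fix i assume i: "i \<in> {1..n-1}"
    have "f i \<in> ?S" using fim i by blast
    then obtain m where m: "m \<in> {1..n-1}" and fi: "f i = c m" by blast
    obtain A B where cp: "is_child_pair n c m A B" using cpair[OF rt m] by blast
    note cpr = child_props[OF rt m cp]
    have pm: "part n (blocks n c (m-1))" using bpart_pred[OF rt m] .
    have blk: "X \<in> blocks n f (i-1)" if X: "X \<in> blocks n c (m-1)" and Xs: "X \<subset> c m" for X
    proof -
      have pX: "X \<in> leaf_clades n \<union> c ` {1..m-1}" and nX: "\<not> (\<exists>T \<in> c ` {1..m-1}. X \<subset> T)"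
        using X unfolding blocks_def by auto
      have Xne: "X \<noteq> {}" using part_ne[OF pm X] .
      have in1: "X \<in> leaf_clades n \<union> f ` {1..i-1}"
      proof (cases "X \<in> leaf_clades n")
        case False
        then obtain k where k: "k \<in> {1..m-1}" and Xk: "X = c k" using pX by blast
        have km: "k \<in> {1..n-1}" using k m by auto
        then have "c k \<in> ?S" by blast
        then obtain i' where i': "i' \<in> {1..n-1}" and fi': "f i' = c k" using fim by (metis imageE)
        have "f i' \<subset> f i" using fi fi' Xk Xs by simp
        then have "i' < i" using fo i i' by blast
        then have "i' \<in> {1..i-1}" using i' by auto
        then show ?thesis using fi' Xk by blast
      qed simp
      have in2: "\<not> (\<exists>T \<in> f ` {1..i-1}. X \<subset> T)"
      proof
        assume "\<exists>T \<in> f ` {1..i-1}. X \<subset> T"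
        then obtain t where t: "t \<in> {1..i-1}" and XT: "X \<subset> f t" by blast
        have tn: "t \<in> {1..n-1}" using t i by auto
        have "f t \<in> ?S" using fim tn by blast
        then obtain s where s: "s \<in> {1..n-1}" and ft: "f t = c s" by blast
        have ti: "t < i" using t by auto
        have ne: "c s \<inter> c m \<noteq> {}" using XT Xs Xne ft by blast
        show False
        proof (cases "s = m")
          case True
          then have "t = i" using inj_onD[OF finj, of t i] ft fi tn i by simp
          then show False using ti by simp
        next
          case False
          then have "s < m \<or> m < s" by arith
          then show False
          proof
            assume sm: "s < m"
            then have "c s \<subseteq> c m" using c_lam[OF rt s m sm] ne by blast
            moreover have "s \<in> {1..m-1}" using s sm by auto
            ultimately show False using nX XT ft by blast
          next
            assume ms: "m < s"
            then have "c m \<subseteq> c s" using c_lam[OF rt m s ms] ne by blast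
            moreover have "c m \<noteq> c s" using inj_onD[OF cinj, of m s] m s ms by auto
            ultimately have "f i \<subset> f t" using fi ft by blast
            then have "i < t" using fo i tn by blast
            then show False using ti by simp
          qed
        qed
      qed
      show ?thesis unfolding blocks_def using in1 in2 by blast
    qed
    have As: "A \<subset> c m" using cpr(4,6,7) by blast
    have Bs: "B \<subset> c m" using cpr(4,5,7) by blast
    have "is_child_pair n f i A B"
      unfolding is_child_pair_def using blk[OF cpr(1) As] blk[OF cpr(2) Bs] cpr(3,4) fi by simp
    then show "\<exists>A B. is_child_pair n f i A B" by blast
  qed
  then show "ranked_tree n f" unfolding ranked_tree_def using fz by blast
qed

theorem proposition1:
  fixes n :: nat and T :: ptree and g :: "nat \<Rightarrow> nat set"
    and g1 g2 :: "nat \<Rightarrow> nat set"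
  assumes "n \<ge> 2"
    and "kingman_pp n T"
    and "g \<in> GK n T"
    and "\<forall>i \<in> {1..n-1}. is_child_pair n g i (g1 i) (g2 i)"
  shows "real (cLT n T g) =
    (\<Prod>i = 1..n-1. fact (card (g1 i) + card (g2 i) - 2)
                     / (fact (card (g1 i) - 1) * fact (card (g2 i) - 1)))"
proof -
  let ?N = "n - 1"
  let ?S = "g ` {1..n-1}"
  let ?R = "\<lambda>i. fact (card (g1 i) + card (g2 i) - 2)
                     / (fact (card (g1 i) - 1) * fact (card (g2 i) - 1)) :: real"
  have rt: "ranked_tree n g" and cg: "compatible n T g" using assms(3) by (auto simp: GK_def)
  have ginj: "inj_on g {1..n-1}" by (rule c_inj[OF rt])
  have cS: "card ?S = ?N" using card_image[OF ginj] by simp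
  have seteq: "{c'\<in>GK n T. LT n c' = LT n g} = linext ?S"
  proof
    show "{c'\<in>GK n T. LT n c' = LT n g} \<subseteq> linext ?S"
    proof
      fix c' assume "c' \<in> {c'\<in>GK n T. LT n c' = LT n g}"
      then have "ranked_tree n c'" "c' ` {1..n-1} = ?S" by (auto simp: GK_def LT_def)
      then show "c' \<in> linext ?S" using ranked_in_linext by metis
    qed
    show "linext ?S \<subseteq> {c'\<in>GK n T. LT n c' = LT n g}"
    proof
      fix f assume f: "f \<in> linext ?S"
      have r: "ranked_tree n f" and im: "f ` {1..n-1} = ?S" using linext_ranked[OF rt f] by auto
      have "clades n f = clades n g" unfolding clades_def using im by simp
      then have "compatible n T f" using cg unfolding compatible_def by simp
      then show "f \<in> {c'\<in>GK n T. LT n c' = LT n g}" using r im by (simp add: GK_def LT_def)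
    qed
  qed
  have finS: "finite ?S" by simp
  have neS: "\<forall>X\<in>?S. X \<noteq> {}" using c_ne[OF rt] by blast
  have lamS: "laminar ?S"
    unfolding laminar_def
  proof (intro ballI)
    fix X Y assume "X \<in> ?S" "Y \<in> ?S"
    then obtain i k where i: "i \<in> {1..n-1}" and k: "k \<in> {1..n-1}" and X: "X = g i" and Y: "Y = g k" by blast
    have "i < k \<or> k < i \<or> i = k" by arith
    then show "X \<subseteq> Y \<or> Y \<subseteq> X \<or> X \<inter> Y = {}"
      using c_lam[OF rt i k] c_lam[OF rt k i] X Y by blast
  qed
  have hk: "real (card (linext ?S)) * (\<Prod>X\<in>?S. real (hook ?S X)) = fact ?N"
    using linext_hook[OF finS cS neS lamS] .
  have hprod: "(\<Prod>X\<in>?S. real (hook ?S X)) = (\<Prod>i=1..n-1. real (card (g i) - 1))"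
  proof -
    have "(\<Prod>X\<in>?S. real (hook ?S X)) = (\<Prod>i=1..n-1. real (hook ?S (g i)))"
      using prod.reindex[OF ginj] by simp
    also have "\<dots> = (\<Prod>i=1..n-1. real (card (g i) - 1))"
    proof (rule prod.cong)
      fix i assume i: "i \<in> {1..n-1}"
      have "{Y\<in>?S. Y \<subseteq> g i} = g ` {k\<in>{1..n-1}. g k \<subseteq> g i}" by blast
      then have "hook ?S (g i) = card (g ` {k\<in>{1..n-1}. g k \<subseteq> g i})" by (simp add: hook_def)
      also have "\<dots> = card {k\<in>{1..n-1}. g k \<subseteq> g i}"
        by (rule card_image) (rule inj_on_subset[OF ginj], blast)
      also have "\<dots> = card (g i) - 1" by (rule hook_c[OF rt i])
      finally show "real (hook ?S (g i)) = real (card (g i) - 1)" by simp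
    qed simp
    finally show ?thesis .
  qed
  have bl: "blocks n g ?N = {{1..n}}"
  proof -
    have p: "part n (blocks n g ?N)" and fb: "finite (blocks n g ?N)" and cb: "card (blocks n g ?N) = n - ?N"
      using blocks_inv[OF rt, of ?N] by auto
    have "card (blocks n g ?N) = 1" using cb assms(1) by simp
    then obtain E where E: "blocks n g ?N = {E}" using card_1_singletonE by blast
    have "E = {1..n}" using p E unfolding part_def by simp
    then show ?thesis using E by simp
  qed
  have tl: "(\<Prod>i=1..?N. ?R i) * (\<Prod>i=1..?N. real (card (g i) - 1)) = fact ?N"
    using tele[OF rt assms(4), of ?N] bl by simp
  have nz: "(\<Prod>i=1..?N. real (card (g i) - 1)) \<noteq> 0"
  proof -
    have "\<forall>i\<in>{1..?N}. real (card (g i) - 1) \<noteq> 0" using c_ge2[OF rt] by fastforce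
    then show ?thesis by simp
  qed
  have "real (card (linext ?S)) * (\<Prod>i=1..?N. real (card (g i) - 1))
      = (\<Prod>i=1..?N. ?R i) * (\<Prod>i=1..?N. real (card (g i) - 1))"
    using hk hprod tl by simp
  then have "real (card (linext ?S)) = (\<Prod>i=1..?N. ?R i)" using nz by simp
  then show ?thesis unfolding cLT_def seteq .
qed

end
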